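(* Fix $m,n,s\in\mathbb{N}$ with $s\le m\le n$. Suppose that there exists an $m$-by-$n$ matrix $A$ with integer entries such that any $s$ of the columns of $A$ are linearly independent. Then there also exists an $m$-by-$n$ matrix $B$ with integer entries such that any $s$ of the columns of $B$ are linearly independent, $B$ has rank $m$, and $$\|B\|_{\ell_2^n\to\ell_2^m}\le\sqrt{1+\|A\|_{\ell_2^n\to\ell_2^m}^2}.$$
   Context: $\|\cdot\|_{\ell_2^n\to\ell_2^m}$ denotes the operator norm from $\mathbb{R}^n$ to $\mathbb{R}^m$, both equipped with the Euclidean norm. *)

theory Defs
  imports "HOL-Analysis.Analysis"
begin

definition int_matrix :: "real^'n^'m \<Rightarrow> bool" where
  "int_matrix A \<longleftrightarrow> (\<forall>i j. A $ i $ j \<in> \<int>)"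

definition cols_indep :: "nat \<Rightarrow> real^'n^'m \<Rightarrow> bool" where
  "cols_indep s A \<longleftrightarrow>
     (\<forall>S :: 'n set. card S = s \<longrightarrow>
        inj_on (\<lambda>j. column j A) S \<and> independent ((\<lambda>j. column j A) ` S))"

end

theory Submission imports Defs begin

lemma mat_col_sum:
  fixes M :: "real^'n^'m"
  assumes "\<And>j. j \<notin> S \<Longrightarrow> c $ j = 0"
  shows "M *v c = (\<Sum>j\<in>S. c $ j *\<^sub>R column j M)"
proof -
  have "M *v c = (\<Sum>j\<in>UNIV. c $ j *\<^sub>R column j M)"
    by (simp add: matrix_mult_sum scalar_mult_eq_scaleR)
  also have "\<dots> = (\<Sum>j\<in>S. c $ j *\<^sub>R column j M)"
    by (rule sum.mono_neutral_right) (auto simp: assms)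
  finally show ?thesis .
qed

lemma indep_cols_iff:
  fixes M :: "real^'n^'m"
  shows "(inj_on (\<lambda>j. column j M) S \<and> independent ((\<lambda>j. column j M) ` S)) \<longleftrightarrow>
         (\<forall>c. (\<forall>j. j \<notin> S \<longrightarrow> c $ j = 0) \<and> M *v c = 0 \<longrightarrow> c = 0)"
proof
  assume L: "inj_on (\<lambda>j. column j M) S \<and> independent ((\<lambda>j. column j M) ` S)"
  show "\<forall>c. (\<forall>j. j \<notin> S \<longrightarrow> c $ j = 0) \<and> M *v c = 0 \<longrightarrow> c = 0"
  proof (intro allI impI)
    fix c :: "real^'n" assume H: "(\<forall>j. j \<notin> S \<longrightarrow> c $ j = 0) \<and> M *v c = 0"
    let ?col = "\<lambda>j. column j M"
    let ?u = "\<lambda>v. c $ (inv_into S ?col v)"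
    have inj: "inj_on ?col S" using L by blast
    have "0 = (\<Sum>j\<in>S. c $ j *\<^sub>R ?col j)" using H mat_col_sum[of S c M] by auto
    also have "\<dots> = (\<Sum>v\<in>?col ` S. ?u v *\<^sub>R v)"
      by (subst sum.reindex[OF inj]) (simp add: inv_into_f_f[OF inj])
    finally have z: "(\<Sum>v\<in>?col ` S. ?u v *\<^sub>R v) = 0" by simp
    have fin: "finite S" by simp
    have "\<not> dependent (?col ` S)" using L by blast
    then have nd: "\<not> (\<exists>u. (\<exists>v\<in>?col ` S. u v \<noteq> 0) \<and> (\<Sum>v\<in>?col ` S. u v *\<^sub>R v) = 0)"
      using dependent_finite[of "?col ` S"] fin by simp
    have "\<forall>v\<in>?col ` S. ?u v = 0"
    proof (intro ballI, rule ccontr)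
      fix v assume v: "v \<in> ?col ` S" "?u v \<noteq> 0"
      have "(\<exists>v\<in>?col ` S. ?u v \<noteq> 0) \<and> (\<Sum>v\<in>?col ` S. ?u v *\<^sub>R v) = 0"
        using v z by blast
      then have "\<exists>u. (\<exists>v\<in>?col ` S. u v \<noteq> 0) \<and> (\<Sum>v\<in>?col ` S. u v *\<^sub>R v) = 0"
        by (rule exI[of _ ?u])
      with nd show False by (rule notE)
    qed
    then have "\<forall>j\<in>S. c $ j = 0" by (auto simp: inv_into_f_f[OF inj])
    then show "c = 0" using H by (metis vec_eq_iff zero_index)
  qed
next
  assume R: "\<forall>c. (\<forall>j. j \<notin> S \<longrightarrow> c $ j = 0) \<and> M *v c = 0 \<longrightarrow> c = 0"
  let ?col = "\<lambda>j. column j M"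
  have inj: "inj_on ?col S"
  proof (rule inj_onI, rule ccontr)
    fix j k assume jk: "j \<in> S" "k \<in> S" "?col j = ?col k" "j \<noteq> k"
    define c :: "real^'n" where "c = axis j 1 - axis k 1"
    have "M *v c = (\<Sum>i\<in>{j,k}. c $ i *\<^sub>R ?col i)"
      by (rule mat_col_sum) (auto simp: c_def axis_def)
    also have "\<dots> = 0" using jk by (simp add: c_def axis_def)
    finally have Mc: "M *v c = 0" .
    have "\<forall>i. i \<notin> S \<longrightarrow> c $ i = 0" using jk by (auto simp: c_def axis_def)
    with Mc R have "c = 0" by blast
    moreover have "c $ j = 1" using jk by (simp add: c_def axis_def)
    ultimately show False by simp
  qed
  moreover have "independent (?col ` S)"
  proof
    assume "dependent (?col ` S)"
    then obtain u where u: "\<exists>v\<in>?col ` S. u v \<noteq> 0" "(\<Sum>v\<in>?col ` S. u v *\<^sub>R v) = 0"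
      using dependent_finite[of "?col ` S"] by auto
    define c :: "real^'n" where "c = (\<chi> j. if j \<in> S then u (?col j) else 0)"
    have "M *v c = (\<Sum>j\<in>S. c $ j *\<^sub>R ?col j)"
      by (rule mat_col_sum) (simp add: c_def)
    also have "\<dots> = (\<Sum>j\<in>S. u (?col j) *\<^sub>R ?col j)" by (simp add: c_def)
    also have "\<dots> = (\<Sum>v\<in>?col ` S. u v *\<^sub>R v)" by (simp add: sum.reindex[OF inj])
    finally have "c = 0" using R u by (simp add: c_def)
    then have c0: "c = 0" .
    have "\<forall>j\<in>S. u (?col j) = 0"
    proof
      fix j assume "j \<in> S"
      have "c $ j = 0" using c0 by simp
      then show "u (?col j) = 0" using \<open>j \<in> S\<close> by (simp add: c_def)
    qed
    then show False using u by auto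
  qed
  ultimately show "inj_on (\<lambda>j. column j M) S \<and> independent ((\<lambda>j. column j M) ` S)" by blast
qed


lemma row_eq: "row i (X::real^'n^'m) = X $ i"
  by (simp add: row_def vec_eq_iff)

lemma nsq: "(norm (v::real^'k))\<^sup>2 = (\<Sum>i\<in>UNIV. (v$i)\<^sup>2)"
  by (simp add: norm_vec_def L2_set_def sum_nonneg)

theorem mainTheorem6:
  fixes A :: "real^'n^'m" and s :: nat
  assumes "s \<le> CARD('m)" and "CARD('m) \<le> CARD('n)"
    and "int_matrix A" and "cols_indep s A"
  shows "\<exists>B :: real^'n^'m. int_matrix B \<and> cols_indep s B \<and> rank B = CARD('m) \<and>
           onorm (\<lambda>x. B *v x) \<le> sqrt (1 + (onorm (\<lambda>x. A *v x))\<^sup>2)"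
proof -
  obtain B0 where B0: "B0 \<subseteq> rows A" "independent B0" "rows A \<subseteq> span B0"
    using maximal_independent_subset[of "rows A"] by blast
  define idx where "idx v = (SOME i. row i A = v)" for v
  have idx: "row (idx v) A = v" if "v \<in> B0" for v
  proof -
    have "\<exists>i. row i A = v" using that B0(1) unfolding rows_def by blast
    then show ?thesis unfolding idx_def by (rule someI_ex)
  qed
  define R where "R = idx ` B0"
  have injidx: "inj_on idx B0" by (metis idx inj_onI)
  have rowR: "\<And>i. i \<in> R \<Longrightarrow> A $ i \<in> B0" using idx by (auto simp: R_def row_eq[symmetric])
  have rowinj: "inj_on (\<lambda>i. A $ i) R" using idx by (auto simp: R_def inj_on_def row_eq[symmetric])
  have cardR: "card R = card B0" using card_image[OF injidx] R_def by simp
  obtain Bx where Bx: "B0 \<subseteq> Bx" "Bx \<subseteq> B0 \<union> Basis" "independent Bx" "B0 \<union> Basis \<subseteq> span Bx"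
    using maximal_independent_subset_extend[of B0 "B0 \<union> Basis"] B0(2) by blast
  have finBx: "finite Bx" using Bx(3) independent_bound by blast
  have "span Basis \<subseteq> span Bx" using Bx(4) by (intro span_minimal) auto
  then have UNIVs: "UNIV \<subseteq> span Bx" by simp
  have "dim (UNIV :: (real^'n) set) \<le> card Bx"
    by (rule span_card_ge_dim[OF _ UNIVs finBx]) simp
  then have cBx: "CARD('n) \<le> card Bx" by simp
  define E where "E = Bx - B0"
  have cardE: "card E = card Bx - card B0"
    unfolding E_def using finBx Bx(1) by (simp add: card_Diff_subset finite_subset)
  have cB0: "card B0 \<le> card Bx" using finBx Bx(1) by (simp add: card_mono)
  have cR: "card (UNIV - R) = CARD('m) - card R" by (simp add: card_Diff_subset)
  have "card (UNIV - R) \<le> card E" using cR cardE cardR cBx cB0 assms(2) by linarith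
  then obtain f where f: "f ` (UNIV - R) \<subseteq> E" "inj_on f (UNIV - R)"
    using card_le_inj[of "UNIV - R" E] finBx unfolding E_def by auto
  have fB: "f i \<in> Basis" if "i \<notin> R" for i using f(1) Bx(2) that unfolding E_def by blast
  define g where "g i = (SOME j. f i = axis j (1::real))" for i
  have fg: "f i = axis (g i) 1" if "i \<notin> R" for i
  proof -
    have "\<exists>j. f i = axis j (1::real)" using fB[OF that] by (auto simp: Basis_vec_def)
    then show ?thesis unfolding g_def by (rule someI_ex)
  qed
  have ginj: "inj_on g (UNIV - R)"
  proof (rule inj_onI)
    fix i k assume "i \<in> UNIV - R" "k \<in> UNIV - R" "g i = g k"
    then have "f i = f k" using fg by auto
    then show "i = k" using f(2) \<open>i \<in> UNIV - R\<close> \<open>k \<in> UNIV - R\<close> by (meson inj_onD)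
  qed
  define M :: "real^'n^'m" where "M = (\<chi> i. if i \<in> R then A $ i else f i)"
  have Mrow: "M $ i = (if i \<in> R then A $ i else axis (g i) 1)" for i
    using fg by (simp add: M_def)
  have intM: "int_matrix M"
    unfolding int_matrix_def
  proof (intro allI)
    fix i j
    show "M $ i $ j \<in> \<int>"
      using assms(3) unfolding int_matrix_def Mrow by (auto simp: axis_def)
  qed
  have ker: "A *v c = 0" if Mc: "M *v c = 0" for c
  proof -
    have "B0 \<subseteq> {v. inner v c = 0}"
    proof
      fix v assume v: "v \<in> B0"
      have "idx v \<in> R" using v by (simp add: R_def)
      then have "inner (M $ idx v) c = 0" using Mc by (metis matrix_vector_mul_component zero_index)
      then show "v \<in> {v. inner v c = 0}" using idx[OF v] \<open>idx v \<in> R\<close> by (simp add: Mrow row_eq)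
    qed
    moreover have "subspace {v. inner v c = 0}"
      by (simp add: subspace_def inner_add_left)
    ultimately have "span B0 \<subseteq> {v. inner v c = 0}" by (rule span_minimal)
    then have "rows A \<subseteq> {v. inner v c = 0}" using B0(3) by blast
    then have "\<forall>k. inner (A $ k) c = 0" unfolding rows_def row_eq by blast
    then show ?thesis by (simp add: vec_eq_iff matrix_vector_mul_component)
  qed
  have colsM: "cols_indep s M"
    unfolding cols_indep_def
  proof (intro allI impI)
    fix S :: "'n set" assume cS: "card S = s"
    have "inj_on (\<lambda>j. column j A) S \<and> independent ((\<lambda>j. column j A) ` S)"
      using assms(4) cS unfolding cols_indep_def by blast
    then have RA: "\<forall>c. (\<forall>j. j \<notin> S \<longrightarrow> c $ j = 0) \<and> A *v c = 0 \<longrightarrow> c = 0"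
      by (simp add: indep_cols_iff)
    have "\<forall>c. (\<forall>j. j \<notin> S \<longrightarrow> c $ j = 0) \<and> M *v c = 0 \<longrightarrow> c = 0"
      using RA ker by blast
    then show "inj_on (\<lambda>j. column j M) S \<and> independent ((\<lambda>j. column j M) ` S)"
      by (simp add: indep_cols_iff)
  qed
  have rowsM: "rows M = range (\<lambda>i. M $ i)" by (auto simp: rows_def row_eq)
  have rsub: "rows M \<subseteq> Bx"
  proof -
    have "M $ i \<in> Bx" for i
    proof (cases "i \<in> R")
      case True then show ?thesis using rowR Bx(1) by (auto simp: M_def)
    next
      case False then show ?thesis using f(1) unfolding E_def by (auto simp: M_def)
    qed
    then show ?thesis using rowsM by auto
  qed
  have injM: "inj (\<lambda>i. M $ i)"
  proof (rule injI)
    fix i k assume eq: "M $ i = M $ k"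
    show "i = k"
    proof (cases "i \<in> R"; cases "k \<in> R")
      assume "i \<in> R" "k \<in> R" then show ?thesis using eq rowinj by (auto simp: M_def inj_on_def)
    next
      assume "i \<in> R" "k \<notin> R"
      then have "M $ i \<in> B0" "M $ k \<notin> B0" using rowR f(1) unfolding E_def by (auto simp: M_def)
      then show ?thesis using eq by simp
    next
      assume "i \<notin> R" "k \<in> R"
      then have "M $ k \<in> B0" "M $ i \<notin> B0" using rowR f(1) unfolding E_def by (auto simp: M_def)
      then show ?thesis using eq by simp
    next
      assume "i \<notin> R" "k \<notin> R" then show ?thesis using eq f(2) by (auto simp: M_def inj_on_def)
    qed
  qed
  have indM: "independent (rows M)" using rsub Bx(3) independent_mono by blast
  have rankM: "rank M = CARD('m)"
  proof -
    have "rank M = dim (rows M)" by (rule row_rank_def)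
    also have "\<dots> = card (rows M)" by (rule dim_eq_card_independent[OF indM])
    also have "\<dots> = CARD('m)" unfolding rowsM using injM by (simp add: card_image)
    finally show ?thesis .
  qed
  define a where "a = onorm (\<lambda>x. A *v x)"
  have nM: "norm (M *v x) \<le> sqrt (1 + a\<^sup>2) * norm x" for x
  proof -
    have comp: "(M *v x) $ i = (if i \<in> R then (A *v x) $ i else x $ g i)" for i
      by (simp add: matrix_vector_mul_component Mrow inner_axis')
    have "(norm (M *v x))\<^sup>2 = (\<Sum>i\<in>UNIV. ((M *v x) $ i)\<^sup>2)" by (rule nsq)
    also have "\<dots> = (\<Sum>i\<in>UNIV - R. ((M *v x) $ i)\<^sup>2) + (\<Sum>i\<in>R. ((M *v x) $ i)\<^sup>2)"
      by (rule sum.subset_diff) auto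
    also have "\<dots> = (\<Sum>i\<in>UNIV - R. (x $ g i)\<^sup>2) + (\<Sum>i\<in>R. ((A *v x) $ i)\<^sup>2)"
      by (simp add: comp)
    also have "(\<Sum>i\<in>UNIV - R. (x $ g i)\<^sup>2) = (\<Sum>j\<in>g ` (UNIV - R). (x $ j)\<^sup>2)"
      by (simp add: sum.reindex[OF ginj])
    also have "\<dots> \<le> (\<Sum>j\<in>UNIV. (x $ j)\<^sup>2)"
      by (rule sum_mono2) auto
    also have "(\<Sum>i\<in>R. ((A *v x) $ i)\<^sup>2) \<le> (\<Sum>i\<in>UNIV. ((A *v x) $ i)\<^sup>2)"
      by (rule sum_mono2) auto
    finally have s1: "(norm (M *v x))\<^sup>2 \<le> (norm x)\<^sup>2 + (norm (A *v x))\<^sup>2"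
      by (simp add: nsq)
    have "norm (A *v x) \<le> a * norm x" unfolding a_def
      by (rule onorm) (rule matrix_vector_mul_bounded_linear)
    then have "(norm (A *v x))\<^sup>2 \<le> (a * norm x)\<^sup>2" by (intro power_mono) auto
    with s1 have "(norm (M *v x))\<^sup>2 \<le> (1 + a\<^sup>2) * (norm x)\<^sup>2"
      by (simp add: power_mult_distrib algebra_simps)
    then have "norm (M *v x) \<le> sqrt ((1 + a\<^sup>2) * (norm x)\<^sup>2)" by (rule real_le_rsqrt)
    also have "\<dots> = sqrt (1 + a\<^sup>2) * norm x" by (simp add: real_sqrt_mult)
    finally show ?thesis .
  qed
  have "onorm (\<lambda>x. M *v x) \<le> sqrt (1 + a\<^sup>2)" by (rule onorm_le) (rule nM)
  then show ?thesis using intM colsM rankM unfolding a_def by blast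
qed

end
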